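(* Let $\Sigma$ be a Hamiltonian surface in the Brady complex $X$. Then for every vertex $x$ of $X$, the Hamiltonian cycle $\Sigma\cap L_x$ of the link $L_x$ contains precisely two rungs (edges labeled $\mathcal{L}$).
   Context: The Brady complex $X$ is the simply connected CAT(0) piecewise Euclidean 2-complex (constructed by T. Brady) on which $\mathrm{Aut}(F_2)$ acts properly and cocompactly by cellular isometries, transitively on vertices. Its closed 2-cells (faces) are unit equilateral triangles and unit lozenges (rhombi with angles $\pi/3$ and $2\pi/3$); every edge lies in exactly one triangle and two lozenges. The link $L_x$ of a vertex $x$ is the graph whose vertices are the edges of $X$ at $x$ and whose edges are the corners at $x$ of faces containing $x$; a link edge is labeled $t$ if it comes from a triangle, $\ell$ if from a lozenge corner of angle $\pi/3$, and $\mathcal{L}$ if from a lozenge corner of angle $2\pi/3$. Each labeled link $L_x$ is isomorphic to the Moebius ladder with vertices $u_0,\dots,u_3,w_0,\dots,w_3$, rungs $u_iw_i$ labeled $\mathcal{L}$, horizontal edges $u_0u_1,u_2u_3,w_0w_1,w_2w_3$ labeled $\ell$ and horizontal edges $u_1u_2,u_3w_0,w_1w_2,w_3u_0$ labeled $t$. A Hamiltonian surface in $X$ is a connected union $\Sigma$ of closed faces which is a surface without boundary, contains every vertex and every edge of $X$, and has no multiple vertex; for each vertex $x$, $\Sigma\cap L_x$ (the link edges given by corners of faces of $\Sigma$) is then a Hamiltonian cycle of $L_x$. *)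

theory Defs
  imports Main
begin

text \<open>Combinatorial model of a piecewise Euclidean 2-complex whose faces are unit
equilateral triangles and unit lozenges.  Vertices are the elements of a type 'v,
edges are 2-element vertex sets, a triangle is given by its 3-element vertex set and a
lozenge by the pair (A, B) of its acute diagonal A (the two corners of angle pi/3) and
its obtuse diagonal B (the two corners of angle 2pi/3); its boundary edges join each
vertex of A to each vertex of B.\<close>

datatype 'v face = Tri "'v set" | Loz "'v set" "'v set"

datatype lab = LabT | Labl | LabL   \<comment> \<open>t, l (angle pi/3 lozenge corner), L (angle 2pi/3)\<close>

fun verts :: "'v face \<Rightarrow> 'v set" where
  "verts (Tri S) = S"
| "verts (Loz A B) = A \<union> B"

fun face_edges :: "'v face \<Rightarrow> 'v set set" where
  "face_edges (Tri S) = {e. e \<subseteq> S \<and> card e = 2}"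
| "face_edges (Loz A B) = {{a, b} | a b. a \<in> A \<and> b \<in> B}"

text \<open>The corner of a face F at one of its vertices x: the two link vertices it joins
(given by the other endpoints of the two boundary edges of F at x) and its label.\<close>

fun corner_pts :: "'v \<Rightarrow> 'v face \<Rightarrow> 'v set" where
  "corner_pts x (Tri S) = S - {x}"
| "corner_pts x (Loz A B) = (if x \<in> A then B else A)"

fun corner_lab :: "'v \<Rightarrow> 'v face \<Rightarrow> lab" where
  "corner_lab x (Tri S) = LabT"
| "corner_lab x (Loz A B) = (if x \<in> A then Labl else LabL)"

definition well_formed_face :: "'v set set \<Rightarrow> 'v face \<Rightarrow> bool" where
  "well_formed_face Ed F \<longleftrightarrow>
     (case F of
        Tri S \<Rightarrow> card S = 3
      | Loz A B \<Rightarrow> card A = 2 \<and> card B = 2 \<and> A \<inter> B = {})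
     \<and> face_edges F \<subseteq> Ed"

definition nbrs :: "'v set set \<Rightarrow> 'v \<Rightarrow> 'v set" where
  "nbrs Ed x = {y. {x, y} \<in> Ed}"

definition faces_at :: "'v face set \<Rightarrow> 'v \<Rightarrow> 'v face set" where
  "faces_at Fs x = {F \<in> Fs. x \<in> verts F}"

text \<open>The labeled Moebius ladder: u_i is encoded as i and w_i as 4 + i (i = 0..3).\<close>

definition ladder_verts :: "nat set" where
  "ladder_verts = {0..<8}"

definition ladder_edges :: "(nat set \<times> lab) set" where
  "ladder_edges =
    {({0,4}, LabL), ({1,5}, LabL), ({2,6}, LabL), ({3,7}, LabL),
     ({0,1}, Labl), ({2,3}, Labl), ({4,5}, Labl), ({6,7}, Labl),
     ({1,2}, LabT), ({3,4}, LabT), ({5,6}, LabT), ({7,0}, LabT)}"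

text \<open>The labeled link of x is isomorphic to the labeled Moebius ladder: a bijection of
the edges at x (identified with the neighbours of x) onto the ladder vertices under which
the corners at x of faces containing x correspond bijectively to the labeled ladder edges.\<close>

definition link_is_ladder :: "'v set set \<Rightarrow> 'v face set \<Rightarrow> 'v \<Rightarrow> bool" where
  "link_is_ladder Ed Fs x \<longleftrightarrow>
     (\<exists>\<phi>. bij_betw \<phi> (nbrs Ed x) ladder_verts \<and>
          bij_betw (\<lambda>F. (\<phi> ` corner_pts x F, corner_lab x F)) (faces_at Fs x) ladder_edges)"

fun is_walk :: "'v set set \<Rightarrow> 'v list \<Rightarrow> bool" where
  "is_walk Ed [] = False"
| "is_walk Ed [a] = True"
| "is_walk Ed (a # b # xs) = ({a, b} \<in> Ed \<and> is_walk Ed (b # xs))"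

definition face_loop :: "'v face \<Rightarrow> 'v list \<Rightarrow> bool" where
  "face_loop F xs \<longleftrightarrow>
     (case F of
        Tri S \<Rightarrow> (\<exists>a b c. S = {a, b, c} \<and> distinct [a, b, c] \<and> xs = [a, b, c, a])
      | Loz A B \<Rightarrow> (\<exists>a b c d. xs = [a, b, c, d, a] \<and> distinct [a, b, c, d] \<and>
                   ((A = {a, c} \<and> B = {b, d}) \<or> (A = {b, d} \<and> B = {a, c}))))"

inductive elem_move :: "'v set set \<Rightarrow> 'v face set \<Rightarrow> 'v list \<Rightarrow> 'v list \<Rightarrow> bool"
  for Ed Fs where
  spur: "{a, b} \<in> Ed \<Longrightarrow> elem_move Ed Fs (p @ [a] @ q) (p @ [a, b, a] @ q)"
| face: "F \<in> Fs \<Longrightarrow> face_loop F xs \<Longrightarrow> hd xs = a \<Longrightarrow>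
         elem_move Ed Fs (p @ [a] @ q) (p @ xs @ q)"

definition homotopic_walks :: "'v set set \<Rightarrow> 'v face set \<Rightarrow> 'v list \<Rightarrow> 'v list \<Rightarrow> bool" where
  "homotopic_walks Ed Fs = (\<lambda>xs ys. (\<lambda>p q. elem_move Ed Fs p q \<or> elem_move Ed Fs q p)\<^sup>*\<^sup>* xs ys)"

definition simply_connected_cx :: "'v set set \<Rightarrow> 'v face set \<Rightarrow> bool" where
  "simply_connected_cx Ed Fs \<longleftrightarrow>
     (\<forall>u v. \<exists>xs. is_walk Ed xs \<and> hd xs = u \<and> last xs = v) \<and>
     (\<forall>xs. is_walk Ed xs \<longrightarrow> hd xs = last xs \<longrightarrow> homotopic_walks Ed Fs xs [hd xs])"

text \<open>The Brady complex, characterised (up to isomorphism) as a simply connected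
triangle/lozenge 2-complex (vertex set UNIV) in which every edge lies in exactly one
triangle and two lozenges and every labeled vertex link is the labeled Moebius ladder.\<close>

definition brady_complex :: "'v set set \<Rightarrow> 'v face set \<Rightarrow> bool" where
  "brady_complex Ed Fs \<longleftrightarrow>
     (\<forall>e\<in>Ed. card e = 2) \<and>
     (\<forall>F\<in>Fs. well_formed_face Ed F) \<and>
     (\<forall>e\<in>Ed. card {F\<in>Fs. e \<in> face_edges F \<and> (\<exists>S. F = Tri S)} = 1 \<and>
              card {F\<in>Fs. e \<in> face_edges F \<and> (\<exists>A B. F = Loz A B)} = 2) \<and>
     (\<forall>x. link_is_ladder Ed Fs x) \<and>
     simply_connected_cx Ed Fs"

text \<open>Hamiltonian surface: a connected union of closed faces which is a surface without
boundary (every edge of it lies in exactly two of its faces, and the corners at each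
vertex form a connected link, i.e. no multiple vertex), containing every vertex and edge.\<close>

definition hamiltonian_surface :: "'v set set \<Rightarrow> 'v face set \<Rightarrow> 'v face set \<Rightarrow> bool" where
  "hamiltonian_surface Ed Fs \<Sigma> \<longleftrightarrow>
     \<Sigma> \<subseteq> Fs \<and> \<Sigma> \<noteq> {} \<and>
     (\<forall>F\<in>\<Sigma>. \<forall>G\<in>\<Sigma>. (\<lambda>F' G'. verts F' \<inter> verts G' \<noteq> {})\<^sup>*\<^sup>* F G) \<and>
     (\<forall>x. \<exists>F\<in>\<Sigma>. x \<in> verts F) \<and>
     (\<forall>e\<in>Ed. \<exists>F\<in>\<Sigma>. e \<in> face_edges F) \<and>
     (\<forall>e. (\<exists>F\<in>\<Sigma>. e \<in> face_edges F) \<longrightarrow> card {F\<in>\<Sigma>. e \<in> face_edges F} = 2) \<and>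
     (\<forall>x. \<forall>y\<in>nbrs Ed x. \<forall>z\<in>nbrs Ed x.
        (\<lambda>p q. \<exists>F\<in>faces_at \<Sigma> x. corner_pts x F = {p, q})\<^sup>*\<^sup>* y z)"

definition rungs_at :: "'v face set \<Rightarrow> 'v \<Rightarrow> 'v face set" where
  "rungs_at \<Sigma> x = {F \<in> faces_at \<Sigma> x. corner_lab x F = LabL}"

end

theory Submission
  imports Defs
begin

definition ham_link :: "(nat set \<times> lab) set \<Rightarrow> bool" where
  "ham_link S \<longleftrightarrow> S \<subseteq> ladder_edges \<and> (\<forall>v\<in>ladder_verts. card {e\<in>S. v \<in> fst e} = 2) \<and>
     (\<forall>v\<in>ladder_verts. \<forall>w\<in>ladder_verts. (\<lambda>p q. \<exists>e\<in>S. fst e = {p, q})\<^sup>*\<^sup>* v w)"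

lemma sep_insert: "{x\<in>insert a A. P x} = (if P a then insert a {x\<in>A. P x} else {x\<in>A. P x})" by auto

lemma sep_sub: "S \<subseteq> L \<Longrightarrow> {e\<in>S. P e} = S \<inter> {e\<in>L. P e}" by auto

lemma card3_2:
  assumes "a \<noteq> b" "a \<noteq> c" "b \<noteq> c"
  shows "card (S \<inter> {a,b,c}) = 2 \<longleftrightarrow> (a\<in>S \<and> b\<in>S \<and> c\<notin>S) \<or> (a\<in>S \<and> b\<notin>S \<and> c\<in>S) \<or> (a\<notin>S \<and> b\<in>S \<and> c\<in>S)"
  using assms by (cases "a\<in>S"; cases "b\<in>S"; cases "c\<in>S") (auto simp: Int_insert_right)

lemma closed_rtranclp:
  assumes "R\<^sup>*\<^sup>* a b" "a \<in> C" "\<And>p q. R p q \<Longrightarrow> p \<in> C \<Longrightarrow> q \<in> C"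
  shows "b \<in> C"
  using assms by (induction rule: rtranclp_induct) auto

lemma lad_constraints:
  assumes "ham_link S"
  shows "(({0,4},LabL)\<in>S \<and> ({0,1},Labl)\<in>S \<and> ({7,0},LabT)\<notin>S) \<or> (({0,4},LabL)\<in>S \<and> ({0,1},Labl)\<notin>S \<and> ({7,0},LabT)\<in>S) \<or> (({0,4},LabL)\<notin>S \<and> ({0,1},Labl)\<in>S \<and> ({7,0},LabT)\<in>S)"
    and "(({1,5},LabL)\<in>S \<and> ({0,1},Labl)\<in>S \<and> ({1,2},LabT)\<notin>S) \<or> (({1,5},LabL)\<in>S \<and> ({0,1},Labl)\<notin>S \<and> ({1,2},LabT)\<in>S) \<or> (({1,5},LabL)\<notin>S \<and> ({0,1},Labl)\<in>S \<and> ({1,2},LabT)\<in>S)"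
    and "(({2,6},LabL)\<in>S \<and> ({2,3},Labl)\<in>S \<and> ({1,2},LabT)\<notin>S) \<or> (({2,6},LabL)\<in>S \<and> ({2,3},Labl)\<notin>S \<and> ({1,2},LabT)\<in>S) \<or> (({2,6},LabL)\<notin>S \<and> ({2,3},Labl)\<in>S \<and> ({1,2},LabT)\<in>S)"
    and "(({3,7},LabL)\<in>S \<and> ({2,3},Labl)\<in>S \<and> ({3,4},LabT)\<notin>S) \<or> (({3,7},LabL)\<in>S \<and> ({2,3},Labl)\<notin>S \<and> ({3,4},LabT)\<in>S) \<or> (({3,7},LabL)\<notin>S \<and> ({2,3},Labl)\<in>S \<and> ({3,4},LabT)\<in>S)"
    and "(({0,4},LabL)\<in>S \<and> ({4,5},Labl)\<in>S \<and> ({3,4},LabT)\<notin>S) \<or> (({0,4},LabL)\<in>S \<and> ({4,5},Labl)\<notin>S \<and> ({3,4},LabT)\<in>S) \<or> (({0,4},LabL)\<notin>S \<and> ({4,5},Labl)\<in>S \<and> ({3,4},LabT)\<in>S)"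
    and "(({1,5},LabL)\<in>S \<and> ({4,5},Labl)\<in>S \<and> ({5,6},LabT)\<notin>S) \<or> (({1,5},LabL)\<in>S \<and> ({4,5},Labl)\<notin>S \<and> ({5,6},LabT)\<in>S) \<or> (({1,5},LabL)\<notin>S \<and> ({4,5},Labl)\<in>S \<and> ({5,6},LabT)\<in>S)"
    and "(({2,6},LabL)\<in>S \<and> ({6,7},Labl)\<in>S \<and> ({5,6},LabT)\<notin>S) \<or> (({2,6},LabL)\<in>S \<and> ({6,7},Labl)\<notin>S \<and> ({5,6},LabT)\<in>S) \<or> (({2,6},LabL)\<notin>S \<and> ({6,7},Labl)\<in>S \<and> ({5,6},LabT)\<in>S)"
    and "(({3,7},LabL)\<in>S \<and> ({6,7},Labl)\<in>S \<and> ({7,0},LabT)\<notin>S) \<or> (({3,7},LabL)\<in>S \<and> ({6,7},Labl)\<notin>S \<and> ({7,0},LabT)\<in>S) \<or> (({3,7},LabL)\<notin>S \<and> ({6,7},Labl)\<in>S \<and> ({7,0},LabT)\<in>S)"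
    and "\<not> (({0,4},LabL)\<in>S \<and> ({1,5},LabL)\<in>S \<and> ({2,6},LabL)\<in>S \<and> ({3,7},LabL)\<in>S)"
proof -
  have sub: "S \<subseteq> ladder_edges" and deg: "\<And>v. v \<in> ladder_verts \<Longrightarrow> card {e\<in>S. v \<in> fst e} = 2"
    and conn: "\<And>v w. v\<in>ladder_verts \<Longrightarrow> w\<in>ladder_verts \<Longrightarrow> (\<lambda>p q. \<exists>e\<in>S. fst e = {p, q})\<^sup>*\<^sup>* v w"
    using assms unfolding ham_link_def by auto
  have D: "card (S \<inter> {(E1,LabL),(E2,Labl),(E3,LabT)}) = 2"
    if "v \<in> ladder_verts" "{e\<in>S. v \<in> fst e} = S \<inter> {(E1,LabL),(E2,Labl),(E3,LabT)}" for v E1 E2 E3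
    using deg[OF that(1)] that(2) by simp
  have c0: "card (S \<inter> {({0,4},LabL),({0,1},Labl),({7,0},LabT)}) = 2"
    by (rule D[of 0]) (simp add: ladder_verts_def, simp only: sep_sub[OF sub], simp only: ladder_edges_def sep_insert, simp add: insert_commute)
  have c1: "card (S \<inter> {({1,5},LabL),({0,1},Labl),({1,2},LabT)}) = 2"
    by (rule D[of 1]) (simp add: ladder_verts_def, simp only: sep_sub[OF sub], simp only: ladder_edges_def sep_insert, simp add: insert_commute)
  have c2: "card (S \<inter> {({2,6},LabL),({2,3},Labl),({1,2},LabT)}) = 2"
    by (rule D[of 2]) (simp add: ladder_verts_def, simp only: sep_sub[OF sub], simp only: ladder_edges_def sep_insert, simp add: insert_commute)
  have c3: "card (S \<inter> {({3,7},LabL),({2,3},Labl),({3,4},LabT)}) = 2"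
    by (rule D[of 3]) (simp add: ladder_verts_def, simp only: sep_sub[OF sub], simp only: ladder_edges_def sep_insert, simp add: insert_commute)
  have c4: "card (S \<inter> {({0,4},LabL),({4,5},Labl),({3,4},LabT)}) = 2"
    by (rule D[of 4]) (simp add: ladder_verts_def, simp only: sep_sub[OF sub], simp only: ladder_edges_def sep_insert, simp add: insert_commute)
  have c5: "card (S \<inter> {({1,5},LabL),({4,5},Labl),({5,6},LabT)}) = 2"
    by (rule D[of 5]) (simp add: ladder_verts_def, simp only: sep_sub[OF sub], simp only: ladder_edges_def sep_insert, simp add: insert_commute)
  have c6: "card (S \<inter> {({2,6},LabL),({6,7},Labl),({5,6},LabT)}) = 2"
    by (rule D[of 6]) (simp add: ladder_verts_def, simp only: sep_sub[OF sub], simp only: ladder_edges_def sep_insert, simp add: insert_commute)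
  have c7: "card (S \<inter> {({3,7},LabL),({6,7},Labl),({7,0},LabT)}) = 2"
    by (rule D[of 7]) (simp add: ladder_verts_def, simp only: sep_sub[OF sub], simp only: ladder_edges_def sep_insert, simp add: insert_commute)
  note cs = c0 c1 c2 c3 c4 c5 c6 c7
  show P0: "(({0,4},LabL)\<in>S \<and> ({0,1},Labl)\<in>S \<and> ({7,0},LabT)\<notin>S) \<or> (({0,4},LabL)\<in>S \<and> ({0,1},Labl)\<notin>S \<and> ({7,0},LabT)\<in>S) \<or> (({0,4},LabL)\<notin>S \<and> ({0,1},Labl)\<in>S \<and> ({7,0},LabT)\<in>S)"
    using c0 by (subst (asm) card3_2) auto
  show P1: "(({1,5},LabL)\<in>S \<and> ({0,1},Labl)\<in>S \<and> ({1,2},LabT)\<notin>S) \<or> (({1,5},LabL)\<in>S \<and> ({0,1},Labl)\<notin>S \<and> ({1,2},LabT)\<in>S) \<or> (({1,5},LabL)\<notin>S \<and> ({0,1},Labl)\<in>S \<and> ({1,2},LabT)\<in>S)"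
    using c1 by (subst (asm) card3_2) auto
  show P2: "(({2,6},LabL)\<in>S \<and> ({2,3},Labl)\<in>S \<and> ({1,2},LabT)\<notin>S) \<or> (({2,6},LabL)\<in>S \<and> ({2,3},Labl)\<notin>S \<and> ({1,2},LabT)\<in>S) \<or> (({2,6},LabL)\<notin>S \<and> ({2,3},Labl)\<in>S \<and> ({1,2},LabT)\<in>S)"
    using c2 by (subst (asm) card3_2) auto
  show P3: "(({3,7},LabL)\<in>S \<and> ({2,3},Labl)\<in>S \<and> ({3,4},LabT)\<notin>S) \<or> (({3,7},LabL)\<in>S \<and> ({2,3},Labl)\<notin>S \<and> ({3,4},LabT)\<in>S) \<or> (({3,7},LabL)\<notin>S \<and> ({2,3},Labl)\<in>S \<and> ({3,4},LabT)\<in>S)"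
    using c3 by (subst (asm) card3_2) auto
  show P4: "(({0,4},LabL)\<in>S \<and> ({4,5},Labl)\<in>S \<and> ({3,4},LabT)\<notin>S) \<or> (({0,4},LabL)\<in>S \<and> ({4,5},Labl)\<notin>S \<and> ({3,4},LabT)\<in>S) \<or> (({0,4},LabL)\<notin>S \<and> ({4,5},Labl)\<in>S \<and> ({3,4},LabT)\<in>S)"
    using c4 by (subst (asm) card3_2) auto
  show P5: "(({1,5},LabL)\<in>S \<and> ({4,5},Labl)\<in>S \<and> ({5,6},LabT)\<notin>S) \<or> (({1,5},LabL)\<in>S \<and> ({4,5},Labl)\<notin>S \<and> ({5,6},LabT)\<in>S) \<or> (({1,5},LabL)\<notin>S \<and> ({4,5},Labl)\<in>S \<and> ({5,6},LabT)\<in>S)"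
    using c5 by (subst (asm) card3_2) auto
  show P6: "(({2,6},LabL)\<in>S \<and> ({6,7},Labl)\<in>S \<and> ({5,6},LabT)\<notin>S) \<or> (({2,6},LabL)\<in>S \<and> ({6,7},Labl)\<notin>S \<and> ({5,6},LabT)\<in>S) \<or> (({2,6},LabL)\<notin>S \<and> ({6,7},Labl)\<in>S \<and> ({5,6},LabT)\<in>S)"
    using c6 by (subst (asm) card3_2) auto
  show P7: "(({3,7},LabL)\<in>S \<and> ({6,7},Labl)\<in>S \<and> ({7,0},LabT)\<notin>S) \<or> (({3,7},LabL)\<in>S \<and> ({6,7},Labl)\<notin>S \<and> ({7,0},LabT)\<in>S) \<or> (({3,7},LabL)\<notin>S \<and> ({6,7},Labl)\<in>S \<and> ({7,0},LabT)\<in>S)"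
    using c7 by (subst (asm) card3_2) auto
  show "\<not> (({0,4},LabL)\<in>S \<and> ({1,5},LabL)\<in>S \<and> ({2,6},LabL)\<in>S \<and> ({3,7},LabL)\<in>S)"
  proof
    assume R: "({0,4},LabL)\<in>S \<and> ({1,5},LabL)\<in>S \<and> ({2,6},LabL)\<in>S \<and> ({3,7},LabL)\<in>S"
    have 01: "(\<lambda>p q. \<exists>e\<in>S. fst e = {p, q})\<^sup>*\<^sup>* 0 1" by (rule conn) (auto simp: ladder_verts_def)
    have cases: "(({0,1},Labl)\<notin>S \<and> ({2,3},Labl)\<notin>S \<and> ({4,5},Labl)\<notin>S \<and> ({6,7},Labl)\<notin>S)
      \<or> (({1,2},LabT)\<notin>S \<and> ({3,4},LabT)\<notin>S \<and> ({5,6},LabT)\<notin>S \<and> ({7,0},LabT)\<notin>S)"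
      using R P0 P1 P2 P3 P4 P5 P6 P7 by blast
    then show False
    proof
      assume N: "({0,1},Labl)\<notin>S \<and> ({2,3},Labl)\<notin>S \<and> ({4,5},Labl)\<notin>S \<and> ({6,7},Labl)\<notin>S"
      have "(1::nat) \<in> {0,3,4,7}"
      proof (rule closed_rtranclp[OF 01])
        fix p q assume "\<exists>e\<in>S. fst e = {p, q}" "p \<in> ({0,3,4,7}::nat set)"
        then obtain e where e: "e \<in> S" "fst e = {p,q}" by auto
        have "\<forall>e\<in>ladder_edges. e \<in> S \<longrightarrow> fst e \<subseteq> {0,3,4,7} \<or> fst e \<inter> {0,3,4,7} = {}"
          unfolding ladder_edges_def using N by simp
        then have "fst e \<subseteq> {0,3,4,7} \<or> fst e \<inter> {0,3,4,7} = {}" using e sub by auto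
        then show "q \<in> {0,3,4,7}" using e \<open>p \<in> _\<close> by auto
      qed auto
      then show False by simp
    next
      assume N: "({1,2},LabT)\<notin>S \<and> ({3,4},LabT)\<notin>S \<and> ({5,6},LabT)\<notin>S \<and> ({7,0},LabT)\<notin>S"
      have "(2::nat) \<in> {0,1,4,5}"
      proof (rule closed_rtranclp[OF conn[of 0 2]])
        fix p q assume "\<exists>e\<in>S. fst e = {p, q}" "p \<in> ({0,1,4,5}::nat set)"
        then obtain e where e: "e \<in> S" "fst e = {p,q}" by auto
        have "\<forall>e\<in>ladder_edges. e \<in> S \<longrightarrow> fst e \<subseteq> {0,1,4,5} \<or> fst e \<inter> {0,1,4,5} = {}"
          unfolding ladder_edges_def using N by simp
        then have "fst e \<subseteq> {0,1,4,5} \<or> fst e \<inter> {0,1,4,5} = {}" using e sub by auto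
        then show "q \<in> {0,1,4,5}" using e \<open>p \<in> _\<close> by auto
      qed (auto simp: ladder_verts_def)
      then show False by simp
    qed
  qed
qed

definition rg :: "nat \<Rightarrow> nat set" where "rg v = {v mod 4, v mod 4 + 4}"

lemma rung_of:
  assumes sub: "S \<subseteq> ladder_edges" and "(E,LabL) \<in> S" "v \<in> E"
  shows "(rg v, LabL) \<in> S"
proof -
  have "(E,LabL) \<in> ladder_edges" using assms by blast
  then have "E = {0,4} \<or> E = {1,5} \<or> E = {2,6} \<or> E = {3,7}" unfolding ladder_edges_def by (simp only: insert_iff prod.inject lab.distinct simp_thms empty_iff)
  then show ?thesis using assms(2,3) by (auto simp: rg_def)
qed

lemma tcases:
  assumes "{p,q} = {1,2} \<or> {p,q} = {3,4} \<or> {p,q} = {5,6} \<or> {p,q} = {7,0::nat}"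
  shows "(p=1\<and>q=2) \<or> (p=2\<and>q=1) \<or> (p=3\<and>q=4) \<or> (p=4\<and>q=3) \<or> (p=5\<and>q=6) \<or> (p=6\<and>q=5) \<or> (p=7\<and>q=0) \<or> (p=0\<and>q=7)"
  using assms unfolding doubleton_eq_iff by blast

lemma ladB:
  assumes H: "ham_link S" and T: "({p,q},LabT) \<in> S" and "(E1,LabL) \<in> S" "p \<in> E1" "(E2,LabL) \<in> S" "q \<in> E2"
  shows False
proof -
  have sub: "S \<subseteq> ladder_edges" using H by (simp add: ham_link_def)
  note C = lad_constraints[OF H]
  have "({p,q},LabT) \<in> ladder_edges" using T sub by blast
  then have t: "{p,q} = {1,2} \<or> {p,q} = {3,4} \<or> {p,q} = {5,6} \<or> {p,q} = {7,0}"
    unfolding ladder_edges_def by (simp only: insert_iff prod.inject lab.distinct simp_thms empty_iff)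
  have rp: "(rg p, LabL) \<in> S" by (rule rung_of[OF sub assms(3,4)])
  have rq: "(rg q, LabL) \<in> S" by (rule rung_of[OF sub assms(5,6)])
  from tcases[OF t] show False
  proof (elim disjE conjE)
    assume "p = 1" "q = 2"
    then have "({1,2},LabT)\<in>S" "({1,5},LabL)\<in>S" "({2,6},LabL)\<in>S"
      using T rp rq by (simp_all add: rg_def insert_commute)
    then show False using C by argo
  next
    assume "p = 2" "q = 1"
    then have "({1,2},LabT)\<in>S" "({2,6},LabL)\<in>S" "({1,5},LabL)\<in>S"
      using T rp rq by (simp_all add: rg_def insert_commute)
    then show False using C by argo
  next
    assume "p = 3" "q = 4"
    then have "({3,4},LabT)\<in>S" "({3,7},LabL)\<in>S" "({0,4},LabL)\<in>S"
      using T rp rq by (simp_all add: rg_def insert_commute)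
    then show False using C by argo
  next
    assume "p = 4" "q = 3"
    then have "({3,4},LabT)\<in>S" "({0,4},LabL)\<in>S" "({3,7},LabL)\<in>S"
      using T rp rq by (simp_all add: rg_def insert_commute)
    then show False using C by argo
  next
    assume "p = 5" "q = 6"
    then have "({5,6},LabT)\<in>S" "({1,5},LabL)\<in>S" "({2,6},LabL)\<in>S"
      using T rp rq by (simp_all add: rg_def insert_commute)
    then show False using C by argo
  next
    assume "p = 6" "q = 5"
    then have "({5,6},LabT)\<in>S" "({2,6},LabL)\<in>S" "({1,5},LabL)\<in>S"
      using T rp rq by (simp_all add: rg_def insert_commute)
    then show False using C by argo
  next
    assume "p = 7" "q = 0"
    then have "({7,0},LabT)\<in>S" "({3,7},LabL)\<in>S" "({0,4},LabL)\<in>S"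
      using T rp rq by (simp_all add: rg_def insert_commute)
    then show False using C by argo
  next
    assume "p = 0" "q = 7"
    then have "({7,0},LabT)\<in>S" "({0,4},LabL)\<in>S" "({3,7},LabL)\<in>S"
      using T rp rq by (simp_all add: rg_def insert_commute)
    then show False using C by argo
  qed
qed

lemma ladA:
  assumes H: "ham_link S"
  shows "card {e\<in>S. snd e = LabL} = 2 \<or> (\<forall>e\<in>ladder_edges. snd e \<noteq> LabL \<longrightarrow> e \<in> S)"
proof -
  have sub: "S \<subseteq> ladder_edges" using H by (simp add: ham_link_def)
  have eq: "{e\<in>S. snd e = LabL} = S \<inter> {({0,4},LabL), ({1,5},LabL), ({2,6},LabL), ({3,7},LabL)}"
    by (simp only: sep_sub[OF sub], simp only: ladder_edges_def sep_insert, simp add: insert_commute)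
  note C = lad_constraints[OF H]
  have "(({0,4},LabL)\<notin>S \<and> ({1,5},LabL)\<notin>S \<and> ({2,6},LabL)\<notin>S \<and> ({3,7},LabL)\<notin>S
     \<and> ({0,1},Labl)\<in>S \<and> ({2,3},Labl)\<in>S \<and> ({4,5},Labl)\<in>S \<and> ({6,7},Labl)\<in>S
     \<and> ({1,2},LabT)\<in>S \<and> ({3,4},LabT)\<in>S \<and> ({5,6},LabT)\<in>S \<and> ({7,0},LabT)\<in>S)
   \<or> (({0,4},LabL)\<in>S \<and> ({1,5},LabL)\<in>S \<and> ({2,6},LabL)\<notin>S \<and> ({3,7},LabL)\<notin>S)
   \<or> (({0,4},LabL)\<notin>S \<and> ({1,5},LabL)\<in>S \<and> ({2,6},LabL)\<in>S \<and> ({3,7},LabL)\<notin>S)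
   \<or> (({0,4},LabL)\<notin>S \<and> ({1,5},LabL)\<notin>S \<and> ({2,6},LabL)\<in>S \<and> ({3,7},LabL)\<in>S)
   \<or> (({0,4},LabL)\<in>S \<and> ({1,5},LabL)\<notin>S \<and> ({2,6},LabL)\<notin>S \<and> ({3,7},LabL)\<in>S)"
    using C by argo
  then show ?thesis
  proof (elim disjE)
    assume A: "({0,4},LabL)\<notin>S \<and> ({1,5},LabL)\<notin>S \<and> ({2,6},LabL)\<notin>S \<and> ({3,7},LabL)\<notin>S
     \<and> ({0,1},Labl)\<in>S \<and> ({2,3},Labl)\<in>S \<and> ({4,5},Labl)\<in>S \<and> ({6,7},Labl)\<in>S
     \<and> ({1,2},LabT)\<in>S \<and> ({3,4},LabT)\<in>S \<and> ({5,6},LabT)\<in>S \<and> ({7,0},LabT)\<in>S"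
    have "\<forall>e\<in>ladder_edges. snd e \<noteq> LabL \<longrightarrow> e \<in> S" unfolding ladder_edges_def using A by simp
    then show ?thesis by simp
  next
    assume A: "({0,4},LabL)\<in>S \<and> ({1,5},LabL)\<in>S \<and> ({2,6},LabL)\<notin>S \<and> ({3,7},LabL)\<notin>S"
    have "S \<inter> {({0,4},LabL), ({1,5},LabL), ({2,6},LabL), ({3,7},LabL)} = {({0,4},LabL), ({1,5},LabL)}"
      using A by (simp only: Int_insert_right Int_empty_right if_True if_False simp_thms)
    moreover have "({0,4::nat},LabL) \<noteq> ({1,5},LabL)" by (simp add: doubleton_eq_iff)
    ultimately show ?thesis by (simp add: eq)
  next
    assume A: "({0,4},LabL)\<notin>S \<and> ({1,5},LabL)\<in>S \<and> ({2,6},LabL)\<in>S \<and> ({3,7},LabL)\<notin>S"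
    have "S \<inter> {({0,4},LabL), ({1,5},LabL), ({2,6},LabL), ({3,7},LabL)} = {({1,5},LabL), ({2,6},LabL)}"
      using A by (simp only: Int_insert_right Int_empty_right if_True if_False simp_thms)
    moreover have "({1,5::nat},LabL) \<noteq> ({2,6},LabL)" by (simp add: doubleton_eq_iff)
    ultimately show ?thesis by (simp add: eq)
  next
    assume A: "({0,4},LabL)\<notin>S \<and> ({1,5},LabL)\<notin>S \<and> ({2,6},LabL)\<in>S \<and> ({3,7},LabL)\<in>S"
    have "S \<inter> {({0,4},LabL), ({1,5},LabL), ({2,6},LabL), ({3,7},LabL)} = {({2,6},LabL), ({3,7},LabL)}"
      using A by (simp only: Int_insert_right Int_empty_right if_True if_False simp_thms)
    moreover have "({2,6::nat},LabL) \<noteq> ({3,7},LabL)" by (simp add: doubleton_eq_iff)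
    ultimately show ?thesis by (simp add: eq)
  next
    assume A: "({0,4},LabL)\<in>S \<and> ({1,5},LabL)\<notin>S \<and> ({2,6},LabL)\<notin>S \<and> ({3,7},LabL)\<in>S"
    have "S \<inter> {({0,4},LabL), ({1,5},LabL), ({2,6},LabL), ({3,7},LabL)} = {({0,4},LabL), ({3,7},LabL)}"
      using A by (simp only: Int_insert_right Int_empty_right if_True if_False simp_thms)
    moreover have "({0,4::nat},LabL) \<noteq> ({3,7},LabL)" by (simp add: doubleton_eq_iff)
    ultimately show ?thesis by (simp add: eq)
  qed
qed

definition linkS :: "('v \<Rightarrow> nat) \<Rightarrow> 'v \<Rightarrow> 'v face set \<Rightarrow> (nat set \<times> lab) set" where
  "linkS \<phi> x \<Sigma> = (\<lambda>F. (\<phi> ` corner_pts x F, corner_lab x F)) ` faces_at \<Sigma> x"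

lemma wf_of: "brady_complex Ed Fs \<Longrightarrow> F \<in> Fs \<Longrightarrow> well_formed_face Ed F"
  by (simp add: brady_complex_def)

lemma face_edges_verts: "e \<in> face_edges F \<Longrightarrow> e \<subseteq> verts F"
  by (cases F) auto

lemma corner_iff:
  assumes "well_formed_face Ed F" "x \<in> verts F"
  shows "{x,y} \<in> face_edges F \<longleftrightarrow> y \<in> corner_pts x F"
proof (cases F)
  case (Tri T)
  then show ?thesis using assms by (auto simp: well_formed_face_def card_insert_if)
next
  case (Loz A B)
  then show ?thesis using assms by (auto simp: well_formed_face_def doubleton_eq_iff)
qed

lemma corner_nbrs:
  assumes "well_formed_face Ed F" "x \<in> verts F"
  shows "corner_pts x F \<subseteq> nbrs Ed x"
proof
  fix y assume "y \<in> corner_pts x F"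
  then have "{x,y} \<in> face_edges F" using corner_iff[OF assms] by simp
  then show "y \<in> nbrs Ed x" using assms(1) by (auto simp: well_formed_face_def nbrs_def)
qed

lemma lab_l: "corner_lab x F = Labl \<Longrightarrow> \<exists>A B. F = Loz A B \<and> x \<in> A \<and> corner_pts x F = B"
  by (cases F) (auto split: if_splits)

lemma lab_L: "corner_lab x F = LabL \<Longrightarrow> \<exists>A B. F = Loz A B \<and> x \<notin> A \<and> corner_pts x F = A"
  by (cases F) (auto split: if_splits)

lemma lab_T: "corner_lab x F = LabT \<Longrightarrow> \<exists>T. F = Tri T \<and> corner_pts x F = T - {x}"
  by (cases F) (auto split: if_splits)

lemma sep_image: "{e \<in> f ` A. P e} = f ` {a\<in>A. P (f a)}" by auto

lemma link_facts:
  assumes B: "brady_complex Ed Fs" and H: "hamiltonian_surface Ed Fs \<Sigma>"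
  obtains \<phi> where "inj_on \<phi> (nbrs Ed x)" "\<phi> ` nbrs Ed x = ladder_verts"
    "ham_link (linkS \<phi> x \<Sigma>)" "card (rungs_at \<Sigma> x) = card {e\<in>linkS \<phi> x \<Sigma>. snd e = LabL}"
proof -
  have "link_is_ladder Ed Fs x" using B unfolding brady_complex_def by (elim conjE) simp
  then obtain \<phi> where phi: "bij_betw \<phi> (nbrs Ed x) ladder_verts"
    and gb: "bij_betw (\<lambda>F. (\<phi> ` corner_pts x F, corner_lab x F)) (faces_at Fs x) ladder_edges"
    unfolding link_is_ladder_def by blast
  have Hcov: "\<forall>e\<in>Ed. \<exists>F\<in>\<Sigma>. e \<in> face_edges F"
    using H unfolding hamiltonian_surface_def by (elim conjE) assumption
  have Htwo: "\<forall>e. (\<exists>F\<in>\<Sigma>. e \<in> face_edges F) \<longrightarrow> card {F\<in>\<Sigma>. e \<in> face_edges F} = 2"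
    using H unfolding hamiltonian_surface_def by (elim conjE) assumption
  have Hconn: "\<forall>x. \<forall>y\<in>nbrs Ed x. \<forall>z\<in>nbrs Ed x.
        (\<lambda>p q. \<exists>F\<in>faces_at \<Sigma> x. corner_pts x F = {p, q})\<^sup>*\<^sup>* y z"
    using H unfolding hamiltonian_surface_def by (elim conjE) assumption
  define g where "g = (\<lambda>F. (\<phi> ` corner_pts x F, corner_lab x F))"
  have SF: "\<Sigma> \<subseteq> Fs" using H unfolding hamiltonian_surface_def by (elim conjE) assumption
  have fsub: "faces_at \<Sigma> x \<subseteq> faces_at Fs x" using SF by (auto simp: faces_at_def)
  have injg: "inj_on g (faces_at \<Sigma> x)"
    using gb fsub unfolding g_def bij_betw_def by (blast intro: inj_on_subset)
  have injp: "inj_on \<phi> (nbrs Ed x)" and imp: "\<phi> ` nbrs Ed x = ladder_verts"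
    using phi by (auto simp: bij_betw_def)
  have LS: "linkS \<phi> x \<Sigma> = g ` faces_at \<Sigma> x" by (simp add: linkS_def g_def)
  have sub: "linkS \<phi> x \<Sigma> \<subseteq> ladder_edges"
    using gb fsub unfolding LS g_def bij_betw_def by blast
  have wfS: "\<And>F. F \<in> faces_at \<Sigma> x \<Longrightarrow> well_formed_face Ed F \<and> x \<in> verts F"
    using wf_of[OF B] SF by (auto simp: faces_at_def)
  have memiff: "\<phi> y \<in> \<phi> ` corner_pts x F \<longleftrightarrow> y \<in> corner_pts x F"
    if "F \<in> faces_at \<Sigma> x" "y \<in> nbrs Ed x" for F y
  proof -
    have "corner_pts x F \<subseteq> nbrs Ed x" using wfS[OF that(1)] by (intro corner_nbrs) auto
    then show ?thesis by (rule inj_on_image_mem_iff[OF injp that(2)])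
  qed
  have deg: "card {e\<in>linkS \<phi> x \<Sigma>. v \<in> fst e} = 2" if v: "v \<in> ladder_verts" for v
  proof -
    have "v \<in> \<phi> ` nbrs Ed x" using v unfolding imp .
    then obtain y where y: "y \<in> nbrs Ed x" "v = \<phi> y" by (rule imageE) blast
    have yE: "{x,y} \<in> Ed" using y by (simp add: nbrs_def)
    have c2: "card {F\<in>\<Sigma>. {x,y} \<in> face_edges F} = 2"
      by (rule Htwo[rule_format, OF Hcov[rule_format, OF yE]])
    have eq1: "{F\<in>\<Sigma>. {x,y} \<in> face_edges F} = {F\<in>faces_at \<Sigma> x. y \<in> corner_pts x F}"
    proof (intro set_eqI iffI)
      fix F assume F: "F \<in> {F\<in>\<Sigma>. {x,y} \<in> face_edges F}"
      then have "{x,y} \<subseteq> verts F" using face_edges_verts[of "{x,y}" F] by simp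
      then have "x \<in> verts F" by simp
      then have Fx: "F \<in> faces_at \<Sigma> x" using F by (simp add: faces_at_def)
      have "y \<in> corner_pts x F" using F corner_iff[of Ed F x y] wfS[OF Fx] by simp
      then show "F \<in> {F\<in>faces_at \<Sigma> x. y \<in> corner_pts x F}" using Fx by simp
    next
      fix F assume F: "F \<in> {F\<in>faces_at \<Sigma> x. y \<in> corner_pts x F}"
      then have Fx: "F \<in> faces_at \<Sigma> x" and Fy: "y \<in> corner_pts x F" by simp_all
      have "{x,y} \<in> face_edges F" using Fy corner_iff[of Ed F x y] wfS[OF Fx] by simp
      moreover have "F \<in> \<Sigma>" using Fx by (simp add: faces_at_def)
      ultimately show "F \<in> {F\<in>\<Sigma>. {x,y} \<in> face_edges F}" by simp
    qed
    have eq2: "{e\<in>linkS \<phi> x \<Sigma>. v \<in> fst e} = g ` {F\<in>faces_at \<Sigma> x. y \<in> corner_pts x F}"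
    proof -
      have "{e\<in>linkS \<phi> x \<Sigma>. v \<in> fst e} = g ` {F\<in>faces_at \<Sigma> x. v \<in> fst (g F)}"
        unfolding LS by (rule sep_image)
      also have "{F\<in>faces_at \<Sigma> x. v \<in> fst (g F)} = {F\<in>faces_at \<Sigma> x. y \<in> corner_pts x F}"
        using memiff[OF _ y(1)] unfolding y(2) g_def by (intro Collect_cong) auto
      finally show ?thesis .
    qed
    have "card (g ` {F\<in>faces_at \<Sigma> x. y \<in> corner_pts x F}) = card {F\<in>faces_at \<Sigma> x. y \<in> corner_pts x F}"
      by (rule card_image) (rule inj_on_subset[OF injg], auto)
    then show ?thesis using eq1 eq2 c2 by simp
  qed
  have conn: "(\<lambda>p q. \<exists>e\<in>linkS \<phi> x \<Sigma>. fst e = {p, q})\<^sup>*\<^sup>* v w"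
    if "v \<in> ladder_verts" "w \<in> ladder_verts" for v w
  proof -
    have "v \<in> \<phi> ` nbrs Ed x" using that(1) unfolding imp .
    then obtain y where y: "y \<in> nbrs Ed x" "v = \<phi> y" by (rule imageE) blast
    have "w \<in> \<phi> ` nbrs Ed x" using that(2) unfolding imp .
    then obtain z where z: "z \<in> nbrs Ed x" "w = \<phi> z" by (rule imageE) blast
    have r: "(\<lambda>p q. \<exists>F\<in>faces_at \<Sigma> x. corner_pts x F = {p, q})\<^sup>*\<^sup>* y z"
      by (rule Hconn[rule_format, OF y(1) z(1)])
    have "(\<lambda>p q. \<exists>e\<in>linkS \<phi> x \<Sigma>. fst e = {p, q})\<^sup>*\<^sup>* (\<phi> y) (\<phi> z)"
      using r
    proof (induction rule: rtranclp_induct)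
      case base then show ?case by simp
    next
      case (step b c)
      then obtain F where F: "F \<in> faces_at \<Sigma> x" "corner_pts x F = {b, c}" by blast
      have "g F \<in> linkS \<phi> x \<Sigma>" unfolding LS using F(1) by (rule imageI)
      moreover have "fst (g F) = {\<phi> b, \<phi> c}" using F(2) by (simp add: g_def)
      ultimately have "(\<lambda>p q. \<exists>e\<in>linkS \<phi> x \<Sigma>. fst e = {p, q}) (\<phi> b) (\<phi> c)" by blast
      with step.IH show ?case by (rule rtranclp.rtrancl_into_rtrancl)
    qed
    then show ?thesis using y z by simp
  qed
  have hl: "ham_link (linkS \<phi> x \<Sigma>)" unfolding ham_link_def using sub deg conn by blast
  have req: "{e\<in>linkS \<phi> x \<Sigma>. snd e = LabL} = g ` rungs_at \<Sigma> x"
    unfolding LS rungs_at_def g_def by auto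
  have "card (g ` rungs_at \<Sigma> x) = card (rungs_at \<Sigma> x)"
    by (rule card_image) (rule inj_on_subset[OF injg], auto simp: rungs_at_def)
  then show ?thesis using that injp imp hl req by simp
qed

lemma ladC:
  assumes "v \<in> ladder_verts"
  shows "\<exists>E. (E,Labl) \<in> ladder_edges \<and> v \<in> E"
proof -
  have "v=0 \<or> v=1 \<or> v=2 \<or> v=3 \<or> v=4 \<or> v=5 \<or> v=6 \<or> v=7" using assms by (auto simp: ladder_verts_def)
  then show ?thesis
  proof (elim disjE)
    assume "v=0" thus ?thesis by (intro exI[of _ "{0,1}"]) (simp add: ladder_edges_def)
  next
    assume "v=1" thus ?thesis by (intro exI[of _ "{0,1}"]) (simp add: ladder_edges_def)
  next
    assume "v=2" thus ?thesis by (intro exI[of _ "{2,3}"]) (simp add: ladder_edges_def)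
  next
    assume "v=3" thus ?thesis by (intro exI[of _ "{2,3}"]) (simp add: ladder_edges_def)
  next
    assume "v=4" thus ?thesis by (intro exI[of _ "{4,5}"]) (simp add: ladder_edges_def)
  next
    assume "v=5" thus ?thesis by (intro exI[of _ "{4,5}"]) (simp add: ladder_edges_def)
  next
    assume "v=6" thus ?thesis by (intro exI[of _ "{6,7}"]) (simp add: ladder_edges_def)
  next
    assume "v=7" thus ?thesis by (intro exI[of _ "{6,7}"]) (simp add: ladder_edges_def)
  qed
qed

lemma card1_eq: "card S = 1 \<Longrightarrow> a \<in> S \<Longrightarrow> b \<in> S \<Longrightarrow> a = b"
  by (metis card_1_singletonE singletonD)

lemma fin:
  assumes Br: "brady_complex Ed Fs" and H: "hamiltonian_surface Ed Fs \<Sigma>"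
    and FT: "Tri T \<in> \<Sigma>" "T = {x,u,v}" "x \<noteq> u" "x \<noteq> v" "u \<noteq> v"
    and P: "Loz A B \<in> \<Sigma>" "u \<in> A" "v \<in> B" "well_formed_face Ed (Loz A B)"
    and Q: "Q \<in> faces_at \<Sigma> v" "corner_lab v Q = LabL" "x \<in> corner_pts v Q"
  shows False
proof -
  obtain \<phi> where hl: "ham_link (linkS \<phi> v \<Sigma>)"
    by (rule link_facts[OF Br H, where x=v])
  have vA: "v \<notin> A" using P(3,4) by (auto simp: well_formed_face_def)
  have "Tri T \<in> faces_at \<Sigma> v" using FT(1,2) by (simp add: faces_at_def)
  moreover have "corner_pts v (Tri T) = {x,u}" using FT(2-5) by auto
  ultimately have e1: "({\<phi> x, \<phi> u}, LabT) \<in> linkS \<phi> v \<Sigma>"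
    unfolding linkS_def by (intro rev_image_eqI[of "Tri T"]) auto
  have "Loz A B \<in> faces_at \<Sigma> v" using P(1,3) by (simp add: faces_at_def)
  then have e2: "(\<phi> ` A, LabL) \<in> linkS \<phi> v \<Sigma>"
    unfolding linkS_def using vA by (intro rev_image_eqI[of "Loz A B"]) auto
  have e3: "(\<phi> ` corner_pts v Q, LabL) \<in> linkS \<phi> v \<Sigma>"
    unfolding linkS_def using Q(1,2) by (intro rev_image_eqI[of Q]) auto
  show False
    by (rule ladB[OF hl e1 e3 _ e2]) (use Q(3) P(2) in auto)
qed

theorem mainTheorem4:
  fixes Ed :: "'v set set" and Fs :: "'v face set" and \<Sigma> :: "'v face set"
  assumes "brady_complex Ed Fs"
    and "hamiltonian_surface Ed Fs \<Sigma>"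
  shows "\<forall>x. card (rungs_at \<Sigma> x) = 2"
proof
  fix x
  note Br = assms(1) and H = assms(2)
  have SF: "\<Sigma> \<subseteq> Fs" using H unfolding hamiltonian_surface_def by (elim conjE) assumption
  have Htwo: "\<forall>e. (\<exists>F\<in>\<Sigma>. e \<in> face_edges F) \<longrightarrow> card {F\<in>\<Sigma>. e \<in> face_edges F} = 2"
    using H unfolding hamiltonian_surface_def by (elim conjE) assumption
  have Bcard: "\<forall>e\<in>Ed. card {F\<in>Fs. e \<in> face_edges F \<and> (\<exists>S. F = Tri S)} = 1 \<and>
              card {F\<in>Fs. e \<in> face_edges F \<and> (\<exists>A B. F = Loz A B)} = 2"
    using Br unfolding brady_complex_def by (elim conjE) assumption
  have wfS: "\<And>F. F \<in> \<Sigma> \<Longrightarrow> well_formed_face Ed F" using wf_of[OF Br] SF by blast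
  show "card (rungs_at \<Sigma> x) = 2"
  proof (rule ccontr)
    assume h: "card (rungs_at \<Sigma> x) \<noteq> 2"
    obtain \<phi> where injp: "inj_on \<phi> (nbrs Ed x)" and imp: "\<phi> ` nbrs Ed x = ladder_verts"
      and hl: "ham_link (linkS \<phi> x \<Sigma>)" and rc: "card (rungs_at \<Sigma> x) = card {e\<in>linkS \<phi> x \<Sigma>. snd e = LabL}"
      by (rule link_facts[OF Br H, where x=x])
    have rim: "\<forall>e\<in>ladder_edges. snd e \<noteq> LabL \<longrightarrow> e \<in> linkS \<phi> x \<Sigma>"
      using ladA[OF hl] h rc by simp
    have "({1,2},LabT) \<in> ladder_edges" by (simp add: ladder_edges_def)
    then have "({1,2},LabT) \<in> linkS \<phi> x \<Sigma>" using rim by simp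
    then obtain F where F: "F \<in> faces_at \<Sigma> x" "corner_lab x F = LabT" by (auto simp: linkS_def)
    obtain T where FT: "F = Tri T" and cpF: "corner_pts x F = T - {x}" using lab_T[OF F(2)] by blast
    have FS: "F \<in> \<Sigma>" and xF: "x \<in> verts F" using F(1) by (simp_all add: faces_at_def)
    have wfF: "well_formed_face Ed F" using wfS[OF FS] .
    have c3: "card T = 3" using wfF FT by (simp add: well_formed_face_def)
    have xT: "x \<in> T" using xF FT by simp
    have "finite T" using c3 by (metis card.infinite zero_neq_numeral)
    then have "card (T - {x}) = 2" using c3 xT by simp
    then obtain y z where yz: "T - {x} = {y,z}" "y \<noteq> z" by (meson card_2_iff)
    have xy: "x \<noteq> y" "x \<noteq> z" using yz(1) by auto
    have Tyz: "T = {x,y,z}" using yz(1) xT by auto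
    have yn: "y \<in> nbrs Ed x" and zn: "z \<in> nbrs Ed x"
      using corner_nbrs[OF wfF xF] cpF yz(1) by auto
    have K: "\<exists>Q\<in>faces_at \<Sigma> w. corner_lab w Q = LabL \<and> x \<in> corner_pts w Q" if w: "w \<in> nbrs Ed x" for w
    proof -
      have "\<phi> w \<in> ladder_verts" using w imp by blast
      then obtain E where E: "(E,Labl) \<in> ladder_edges" "\<phi> w \<in> E" using ladC by blast
      then have "(E,Labl) \<in> linkS \<phi> x \<Sigma>" using rim by simp
      then obtain Q where Q: "Q \<in> faces_at \<Sigma> x" "\<phi> ` corner_pts x Q = E" "corner_lab x Q = Labl"
        unfolding linkS_def by (auto simp: image_iff)
      have QS: "Q \<in> \<Sigma>" and xQ: "x \<in> verts Q" using Q(1) by (simp_all add: faces_at_def)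
      have wfQ: "well_formed_face Ed Q" using wfS[OF QS] .
      have "w \<in> corner_pts x Q"
        using inj_on_image_mem_iff[OF injp w corner_nbrs[OF wfQ xQ]] Q(2) E(2) by simp
      moreover obtain A B where AB: "Q = Loz A B" "x \<in> A" "corner_pts x Q = B" using lab_l[OF Q(3)] by blast
      ultimately have wB: "w \<in> B" by simp
      have "A \<inter> B = {}" using wfQ AB(1) by (simp add: well_formed_face_def)
      then have wA: "w \<notin> A" using wB by blast
      have "Q \<in> faces_at \<Sigma> w" using QS AB(1) wB by (simp add: faces_at_def)
      moreover have "corner_lab w Q = LabL" "corner_pts w Q = A" using AB(1) wA by simp_all
      ultimately show ?thesis using AB(2) by blast
    qed
    have yzF: "{y,z} \<in> face_edges F" using FT Tyz yz(2) by auto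
    have yzE: "{y,z} \<in> Ed" using yzF wfF by (auto simp: well_formed_face_def)
    have c2: "card {G\<in>\<Sigma>. {y,z} \<in> face_edges G} = 2"
      using Htwo FS yzF by blast
    have "\<exists>P. P \<in> \<Sigma> \<and> {y,z} \<in> face_edges P \<and> P \<noteq> F"
    proof (rule ccontr)
      assume "\<not> ?thesis"
      then have "{G\<in>\<Sigma>. {y,z} \<in> face_edges G} \<subseteq> {F}" by blast
      then have "card {G\<in>\<Sigma>. {y,z} \<in> face_edges G} \<le> 1" using card_mono[of "{F}"] by simp
      then show False using c2 by simp
    qed
    then obtain P where P: "P \<in> \<Sigma>" "{y,z} \<in> face_edges P" "P \<noteq> F" by blast
    have c1: "card {G\<in>Fs. {y,z} \<in> face_edges G \<and> (\<exists>S. G = Tri S)} = 1"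
      using Bcard yzE by blast
    have "\<not> (\<exists>S. P = Tri S)"
    proof
      assume "\<exists>S. P = Tri S"
      then have "P \<in> {G\<in>Fs. {y,z} \<in> face_edges G \<and> (\<exists>S. G = Tri S)}" using P SF by blast
      moreover have "F \<in> {G\<in>Fs. {y,z} \<in> face_edges G \<and> (\<exists>S. G = Tri S)}" using FS SF yzF FT by blast
      ultimately show False using card1_eq[OF c1] P(3) by blast
    qed
    then obtain A B where PAB: "P = Loz A B" by (cases P) auto
    from P(2) PAB obtain a b where ab: "{y,z} = {a,b}" "a \<in> A" "b \<in> B" by auto
    have wfP: "well_formed_face Ed (Loz A B)" using wfS[OF P(1)] PAB by simp
    have PS: "Loz A B \<in> \<Sigma>" using P(1) PAB by simp
    have TS: "Tri T \<in> \<Sigma>" using FS FT by simp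
    from ab(1) have "(y = a \<and> z = b) \<or> (y = b \<and> z = a)" by (simp add: doubleton_eq_iff)
    then show False
    proof
      assume "y = a \<and> z = b"
      then have "y \<in> A" "z \<in> B" using ab by auto
      moreover obtain Q where "Q \<in> faces_at \<Sigma> z" "corner_lab z Q = LabL" "x \<in> corner_pts z Q" using K[OF zn] by blast
      ultimately show False using fin[OF Br H TS Tyz xy(1) xy(2) yz(2) PS _ _ wfP] by blast
    next
      assume "y = b \<and> z = a"
      then have "z \<in> A" "y \<in> B" using ab by auto
      moreover have "T = {x,z,y}" using Tyz by auto
      moreover obtain Q where "Q \<in> faces_at \<Sigma> y" "corner_lab y Q = LabL" "x \<in> corner_pts y Q" using K[OF yn] by blast
      ultimately show False using fin[OF Br H TS _ xy(2) xy(1) yz(2)[symmetric] PS _ _ wfP] by blast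
    qed
  qed
qed

end
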